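(* Let $\mathcal{C}=\mathcal{I}_{\beta_1}\oplus\mathcal{I}_{\beta_2}$ with $0\le\beta_1<\beta_2\le s$. Then $$N_{\langle\rho\rangle}(\mathcal{C}^{*})=\frac{(q^{d_{\beta_1}}-1)(q^{d_{\beta_2}}-1)\gcd(1+t\alpha_{\beta_1},1+t\alpha_{\beta_2},n)}{tn}+\frac{(q^{d_{\beta_1}}-1)\gcd(1+t\alpha_{\beta_1},n)}{tn}+\frac{(q^{d_{\beta_2}}-1)\gcd(1+t\alpha_{\beta_2},n)}{tn}.$$ Moreover, the number of distinct nonzero Hamming weights of $\mathcal{C}$ is at most $N_{\langle\rho\rangle}(\mathcal{C}^{*})$, with equality if and only if for any two nonzero codewords $c_1,c_2\in\mathcal{C}$ of the same Hamming weight there exists an integer $j$ with $\rho^{j}(c_1)=c_2$.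
   Context: Standing setup: $q$ is a prime power, $n$ a positive integer with $\gcd(n,q)=1$, $\lambda\in\mathbb{F}_q^{*}$ has multiplicative order $t$ (so $t\mid q-1$). $\mathcal{R}=\mathbb{F}_q[x]/\langle x^n-\lambda\rangle$; vectors in $\mathbb{F}_q^n$ are identified with polynomials of degree $<n$, and a $\lambda$-constacyclic code of length $n$ is an ideal of $\mathcal{R}$. Let $\zeta$ be a primitive $tn$-th root of unity in an extension $\mathbb{F}_{q^m}$ with $\zeta^n=\lambda$. The set $\mathcal{S}=\{1+ti:0\le i\le n-1\}$ (residues mod $tn$) is partitioned into the distinct $q$-cyclotomic cosets modulo $tn$, $C_{1+t\alpha_j}=\{(1+t\alpha_j)q^{h}\bmod tn: h\ge 0\}$, $j=0,\dots,s$, with $0=\alpha_0<\dots<\alpha_s\le n-1$ and $d_j=|C_{1+t\alpha_j}|$. Let $m_j(x)=\prod_{h\in C_{1+t\alpha_j}}(x-\zeta^{h})$, and let $\mathcal{I}_j$ be the ideal of $\mathcal{R}$ generated by $(x^n-\lambda)/m_j(x)$ (the irreducible $\lambda$-constacyclic code of dimension $d_j$ corresponding to $C_{1+t\alpha_j}$). The cyclic shift $\rho$ is $\rho(c(x))=xc(x)$ in $\mathcal{R}$, i.e. $(c_0,\dots,c_{n-1})\mapsto(\lambda c_{n-1},c_0,\dots,c_{n-2})$; $\langle\rho\rangle$ has order $tn$. $\mathcal{C}^{*}=\mathcal{C}\setminus\{0\}$, and $N_G(X)$ is the number of orbits of a group $G$ acting on $X$. *)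

theory Defs
  imports "HOL-Computational_Algebra.Polynomial" Complex_Main
begin

definition mord :: "'a::field \<Rightarrow> nat" where
  "mord a = (LEAST k. 0 < k \<and> a ^ k = 1)"

definition cyc_coset :: "nat \<Rightarrow> nat \<Rightarrow> nat \<Rightarrow> nat set" where
  "cyc_coset q N k = {(k * q ^ h) mod N | h. True}"

text \<open>The indices alpha_j: alpha in {0..n-1} such that 1+t*alpha is the smallest
  element of S lying in its cyclotomic coset (so alpha_0 = 0 < alpha_1 < ... < alpha_s).\<close>
definition coset_reps :: "nat \<Rightarrow> nat \<Rightarrow> nat \<Rightarrow> nat set" where
  "coset_reps q t n = {a. a < n \<and> (\<forall>b<a. 1 + t * b \<notin> cyc_coset q (t * n) (1 + t * a))}"

definition cmodulus :: "'a::comm_ring_1 \<Rightarrow> nat \<Rightarrow> 'a poly" where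
  "cmodulus lam n = monom 1 n - [:lam:]"

definition min_poly_coset ::
  "('a::field \<Rightarrow> 'b::field) \<Rightarrow> 'b \<Rightarrow> nat \<Rightarrow> nat \<Rightarrow> nat \<Rightarrow> nat \<Rightarrow> 'a poly" where
  "min_poly_coset emb \<zeta> q t n a =
     (THE p. map_poly emb p = (\<Prod>h\<in>cyc_coset q (t * n) (1 + t * a). [:- (\<zeta> ^ h), 1:]))"

definition irr_code ::
  "('a::field \<Rightarrow> 'b::field) \<Rightarrow> 'b \<Rightarrow> 'a \<Rightarrow> nat \<Rightarrow> nat \<Rightarrow> nat \<Rightarrow> nat \<Rightarrow> 'a poly set" where
  "irr_code emb \<zeta> lam q t n a =
     {(((cmodulus lam n) div (min_poly_coset emb \<zeta> q t n a)) * f) mod (cmodulus lam n) | f. True}"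

definition code_sum :: "'a::comm_ring_1 poly set \<Rightarrow> 'a poly set \<Rightarrow> 'a poly set" where
  "code_sum A B = {x + y | x y. x \<in> A \<and> y \<in> B}"

definition rho :: "'a::field \<Rightarrow> nat \<Rightarrow> 'a poly \<Rightarrow> 'a poly" where
  "rho lam n c = (monom 1 1 * c) mod (cmodulus lam n)"

definition rho_orbit :: "'a::field \<Rightarrow> nat \<Rightarrow> 'a poly \<Rightarrow> 'a poly set" where
  "rho_orbit lam n c = {(rho lam n ^^ j) c | j. True}"

text \<open>Number of orbits of <rho> on a set X (X assumed <rho>-invariant).\<close>
definition num_rho_orbits :: "'a::field \<Rightarrow> nat \<Rightarrow> 'a poly set \<Rightarrow> nat" where
  "num_rho_orbits lam n X = card (rho_orbit lam n ` X)"

definition hamming_wt :: "nat \<Rightarrow> 'a::zero poly \<Rightarrow> nat" where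
  "hamming_wt n c = card {i. i < n \<and> coeff c i \<noteq> 0}"

end

theory Submission
  imports Defs "Berlekamp_Zassenhaus.Finite_Field"
begin

hide_const (open) up_ring.coeff up_ring.monom module.smult


lemma card_ge2: "2 \<le> CARD('a::{field,finite})"
proof -
  have "{0::'a, 1} \<subseteq> UNIV" by auto
  hence "card {0::'a,1} \<le> CARD('a)" by (intro card_mono) auto
  thus ?thesis by simp
qed

lemma fermat_nz:
  fixes z :: "'a::{field,finite}"
  assumes "z \<noteq> 0"
  shows "z ^ (CARD('a) - 1) = 1"
proof -
  let ?U = "UNIV - {0::'a}"
  have fin: "finite ?U" by simp
  have bij: "bij_betw (\<lambda>y. z * y) ?U ?U"
    unfolding bij_betw_def inj_on_def
  proof (intro conjI ballI impI)
    show "(\<lambda>y. z * y) ` ?U = ?U"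
    proof
      show "(\<lambda>y. z * y) ` ?U \<subseteq> ?U" using assms by auto
      show "?U \<subseteq> (\<lambda>y. z * y) ` ?U"
      proof
        fix x assume "x \<in> ?U"
        hence "x = z * (inverse z * x)" "inverse z * x \<in> ?U" using assms by (auto simp: field_simps)
        thus "x \<in> (\<lambda>y. z * y) ` ?U" by blast
      qed
    qed
  qed (use assms in auto)
  have "prod (\<lambda>y. z * y) ?U = prod id ?U"
    using prod.reindex_bij_betw[OF bij, of id] by simp
  moreover have "prod (\<lambda>y. z * y) ?U = z ^ card ?U * prod id ?U"
    by (simp add: prod.distrib)
  moreover have "prod id ?U \<noteq> 0" by (simp add: prod_zero_iff)
  ultimately have "z ^ card ?U = 1" by simp
  moreover have "card ?U = CARD('a) - 1" by (simp add: card_Diff_singleton)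
  ultimately show ?thesis by simp
qed

lemma fermat:
  fixes z :: "'a::{field,finite}"
  shows "z ^ CARD('a) = z"
proof (cases "z = 0")
  case True thus ?thesis using card_ge2[where 'a='a] by (simp add: power_0_left)
next
  case False
  have "CARD('a) = Suc (CARD('a) - 1)" using card_ge2[where 'a='a] by simp
  hence "z ^ CARD('a) = z * z ^ (CARD('a) - 1)" by (metis power_Suc)
  thus ?thesis using fermat_nz[OF False] by simp
qed

lemma mord_props:
  fixes x :: "'a::{field,finite}"
  assumes "x \<noteq> 0"
  shows "0 < mord x" "x ^ mord x = 1" "x ^ k = 1 \<longleftrightarrow> mord x dvd k"
proof -
  have ex: "\<exists>k. 0 < k \<and> x ^ k = 1"
    using fermat_nz[OF assms] card_ge2[where 'a='a] by (intro exI[of _ "CARD('a) - 1"]) auto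
  from LeastI_ex[OF ex] show p: "0 < mord x" "x ^ mord x = 1" unfolding mord_def by auto
  show "x ^ k = 1 \<longleftrightarrow> mord x dvd k"
  proof
    assume h: "x ^ k = 1"
    have "x ^ k = (x ^ mord x) ^ (k div mord x) * x ^ (k mod mord x)"
      by (metis div_mult_mod_eq power_add power_mult mult.commute)
    hence "x ^ (k mod mord x) = 1" using h p by simp
    moreover have "k mod mord x < mord x" using p by simp
    ultimately have "k mod mord x = 0"
      using not_less_Least[of "k mod mord x" "\<lambda>k. 0 < k \<and> x ^ k = 1"] unfolding mord_def by auto
    thus "mord x dvd k" by auto
  next
    assume "mord x dvd k" then obtain j where "k = mord x * j" by auto
    thus "x ^ k = 1" using p by (simp add: power_mult)
  qed
qed


lemma deg_lt_coeff:
  assumes "0 < n" "\<And>i. n \<le> i \<Longrightarrow> coeff p i = 0"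
  shows "degree p < n"
proof (rule ccontr)
  assume "\<not> degree p < n"
  hence "coeff p (degree p) = 0" using assms(2) by simp
  hence "p = 0" by simp
  thus False using \<open>\<not> degree p < n\<close> assms(1) by simp
qed

lemma choose_zero_field:
  assumes "0 < k" "k < CARD('a::{field,finite})"
  shows "(of_nat (CARD('a) choose k) :: 'a) = 0"
proof -
  let ?q = "CARD('a)"
  define P :: "'a poly" where "P = [:1,1:] ^ ?q - monom 1 ?q"
  have cP: "coeff P i = (if i \<le> ?q then of_nat (?q choose i) else 0) - (if i = ?q then 1 else 0)" for i
    unfolding P_def by (auto simp: coeff_linear_poly_power coeff_monom coeff_eq_0 degree_power_le
        intro!: coeff_eq_0 le_less_trans[OF degree_power_le])
  have dP: "degree P < ?q"
    using card_ge2[where 'a='a] by (intro deg_lt_coeff) (auto simp: cP)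
  have "P = 1"
  proof (rule poly_eqI_degree[where A=UNIV])
    fix x :: 'a
    show "poly P x = poly 1 x" unfolding P_def
      using fermat[of "1+x"] fermat[of x] by (simp add: poly_monom add.commute)
  qed (use dP card_ge2[where 'a='a] in auto)
  hence "coeff P k = 0" using assms by simp
  thus ?thesis using cP[of k] assms by simp
qed

locale cc =
  fixes lam :: "'a::{field,finite}" and emb :: "'a \<Rightarrow> 'b::{field,finite}"
    and \<zeta> :: 'b and q n t :: nat
  assumes q_def: "q = card (UNIV :: 'a set)"
    and n_pos: "0 < n"
    and cop: "coprime n q"
    and lam_nz: "lam \<noteq> 0"
    and t_def: "t = mord lam"
    and emb_add: "\<And>x y. emb (x + y) = emb x + emb y"
    and emb_mult: "\<And>x y. emb (x * y) = emb x * emb y"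
    and emb_one: "emb 1 = 1"
    and zeta_nz: "\<zeta> \<noteq> 0" and zeta_ord: "mord \<zeta> = t * n"
    and zeta_n: "\<zeta> ^ n = emb lam"
begin

lemma emb0: "emb 0 = 0"
proof -
  have "emb 0 + emb 0 = emb 0 + 0" using emb_add[of 0 0] by simp
  thus ?thesis by (rule add_left_imp_eq)
qed

sublocale field_hom emb by unfold_locales (auto simp: emb_add emb_mult emb_one emb0)

sublocale mp: map_poly_idom_hom emb ..

lemma emb_inj: "inj emb"
proof (rule injI)
  fix x y assume h: "emb x = emb y"
  show "x = y"
  proof (rule ccontr)
    assume "x \<noteq> y"
    hence "emb ((x - y) * inverse (x - y)) = 1" by (simp add: emb_one)
    moreover have "emb (x - y) = 0" using h by (simp add: hom_distribs)
    ultimately show False by (simp add: hom_distribs)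
  qed
qed

lemma q_ge2: "2 \<le> q" using card_ge2[where 'a='a] q_def by simp

lemma choose_zero_b: "0 < k \<Longrightarrow> k < q \<Longrightarrow> (of_nat (q choose k) :: 'b) = 0"
  using choose_zero_field[where 'a='a, of k] q_def hom_of_nat[of "q choose k"] by (simp add: emb0)

lemma frob_add: "(x + y :: 'b) ^ q = x ^ q + y ^ q"
proof -
  have "(x + y) ^ q = (\<Sum>k\<le>q. of_nat (q choose k) * x ^ k * y ^ (q - k))"
    by (simp add: binomial_ring)
  also have "\<dots> = (\<Sum>k\<in>{0,q}. of_nat (q choose k) * x ^ k * y ^ (q - k))"
    using choose_zero_b by (intro sum.mono_neutral_right) auto
  also have "\<dots> = x ^ q + y ^ q" using q_ge2 by simp
  finally show ?thesis .
qed

definition fr :: "'b \<Rightarrow> 'b" where "fr x = x ^ q"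

sublocale frh: comm_ring_hom fr
  using q_ge2 by unfold_locales (auto simp: fr_def frob_add power_mult_distrib)

sublocale mpfr: map_poly_comm_ring_hom fr ..

lemma emb_fix: "emb x ^ q = emb x"
  using fermat[of x] q_def by (simp add: hom_distribs[symmetric])

lemma fixed_range: "x ^ q = x \<longleftrightarrow> x \<in> range emb"
proof
  assume h: "x ^ q = x"
  define P :: "'b poly" where "P = monom 1 q - [:0,1:]"
  have "coeff [:0,1::'b:] q = 0" using q_ge2 by (intro coeff_eq_0) auto
  hence cP: "coeff P q = 1" by (simp add: P_def coeff_monom)
  hence P0: "P \<noteq> 0" by auto
  have dP: "degree P \<le> q" unfolding P_def
    using q_ge2 by (intro degree_diff_le) (auto simp: degree_monom_le)
  have roots: "{x. poly P x = 0} = {x. x ^ q = x}" by (auto simp: P_def poly_monom)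
  have "card {x. poly P x = 0} \<le> q" using card_poly_roots_bound[OF P0] dP by simp
  hence c1: "card {x::'b. x ^ q = x} \<le> q" using roots by simp
  have sub: "range emb \<subseteq> {x. x ^ q = x}" using emb_fix by auto
  have c2: "card (range emb) = q" using card_image[OF emb_inj] q_def by simp
  have "range emb = {x. x ^ q = x}"
    using card_seteq[OF _ sub] c1 c2 by simp
  thus "x \<in> range emb" using h by simp
qed (auto simp: emb_fix)

end


context cc begin

abbreviation "NN \<equiv> t * n"

lemma t_pos: "0 < t" using mord_props(1)[OF lam_nz] t_def by simp
lemma N_pos: "0 < NN" using t_pos n_pos by simp

lemma t_dvd_q1: "t dvd (q - 1)"
proof -
  have "lam ^ (q - 1) = 1" using fermat_nz[OF lam_nz] q_def by simp
  thus ?thesis using mord_props(3)[OF lam_nz] t_def by simp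
qed

lemma q_mod_t: "q mod t = 1 mod t"
proof -
  obtain k where k: "q - 1 = t * k" using t_dvd_q1 by auto
  have "q = (q - 1) + 1" using q_ge2 by simp
  hence "q = 1 + k * t" using k by (simp add: mult.commute)
  thus ?thesis by (metis mod_mult_self1)
qed

lemma cop_qt: "coprime q t"
proof -
  obtain k where k: "q - 1 = t * k" using t_dvd_q1 by auto
  have "q = (q - 1) + 1" using q_ge2 by simp
  hence "q = k * t + 1" using k by (simp add: mult.commute)
  hence "gcd q t = gcd 1 t" by (metis gcd.commute gcd_add_mult)
  thus ?thesis by (simp add: coprime_iff_gcd_eq_1)
qed

lemma cop_qN: "coprime q NN"
  using cop_qt cop by (simp add: coprime_commute)

lemma zeta_pow1: "\<zeta> ^ k = 1 \<longleftrightarrow> NN dvd k"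
  using mord_props(3)[OF zeta_nz] zeta_ord by simp

lemma zeta_N: "\<zeta> ^ NN = 1" using zeta_pow1 by simp

lemma zeta_mod: "\<zeta> ^ k = \<zeta> ^ (k mod NN)"
proof -
  have "\<zeta> ^ k = (\<zeta> ^ NN) ^ (k div NN) * \<zeta> ^ (k mod NN)"
    by (metis div_mult_mod_eq power_add power_mult mult.commute)
  thus ?thesis using zeta_N by simp
qed

lemma zeta_inj: "i < NN \<Longrightarrow> j < NN \<Longrightarrow> \<zeta> ^ i = \<zeta> ^ j \<Longrightarrow> i = j"
proof (induction i j rule: linorder_wlog)
  case (le i j)
  have "j = i + (j - i)" using le by simp
  hence "\<zeta> ^ j = \<zeta> ^ i * \<zeta> ^ (j - i)" by (metis power_add)
  hence "\<zeta> ^ (j - i) = 1" using le zeta_nz by simp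
  hence "NN dvd (j - i)" using zeta_pow1 by simp
  moreover have "j - i < NN" using le by simp
  ultimately have "j - i = 0" using dvd_imp_le by (cases "j - i = 0") auto
  thus ?case using le by simp
qed (simp add: eq_commute)

abbreviation "cs a \<equiv> cyc_coset q NN a"

lemma cs_sub: "cs a \<subseteq> {..<NN}"
  using N_pos by (auto simp: cyc_coset_def)

lemma cs_fin: "finite (cs a)" using cs_sub finite_subset by blast

lemma cs_self: "a mod NN \<in> cs a"
  unfolding cyc_coset_def by (auto intro!: exI[of _ 0])

lemma cs_mulq: "x \<in> cs a \<Longrightarrow> (x * q) mod NN \<in> cs a"
proof -
  assume "x \<in> cs a"
  then obtain h where x: "x = (a * q ^ h) mod NN" unfolding cyc_coset_def by auto
  have "(x * q) mod NN = (a * q ^ h * q) mod NN"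
    unfolding x by (rule mod_mult_left_eq)
  also have "\<dots> = (a * q ^ Suc h) mod NN" by (simp only: power_Suc2 mult.assoc)
  finally have "(x * q) mod NN = (a * q ^ Suc h) mod NN" .
  thus ?thesis unfolding cyc_coset_def by blast
qed

lemma cs_trans: "x \<in> cs a \<Longrightarrow> cs x \<subseteq> cs a"
proof
  fix y assume "x \<in> cs a" "y \<in> cs x"
  then obtain h k where x: "x = (a * q ^ h) mod NN" and y: "y = (x * q ^ k) mod NN"
    unfolding cyc_coset_def by auto
  have "y = (a * q ^ (h + k)) mod NN"
    unfolding x y by (simp add: mod_mult_left_eq mult.assoc power_add)
  thus "y \<in> cs a" unfolding cyc_coset_def by blast
qed

lemma q_per: "q ^ totient NN mod NN = 1 mod NN"
  using euler_theorem[OF cop_qN] by (simp add: cong_def)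

lemma cs_back: "x \<in> cs a \<Longrightarrow> a mod NN \<in> cs x"
proof -
  assume "x \<in> cs a"
  then obtain h where x: "x = (a * q ^ h) mod NN" unfolding cyc_coset_def by auto
  define P where "P = totient NN"
  have P: "P > 0" using N_pos by (simp add: P_def)
  have X: "(q ^ (P * h)) mod NN = 1 mod NN"
  proof -
    have "(q ^ (P * h)) mod NN = ((q ^ P mod NN) ^ h) mod NN" by (metis power_mult power_mod)
    also have "\<dots> = ((1 mod NN) ^ h) mod NN" using q_per by (simp add: P_def)
    also have "\<dots> = 1 mod NN" by (metis power_mod power_one)
    finally show ?thesis .
  qed
  have e: "h + h * (P - 1) = P * h" using P by (cases P) (auto simp: algebra_simps)
  have "(x * q ^ (h * (P - 1))) mod NN = (a * q ^ h * q ^ (h * (P - 1))) mod NN"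
    unfolding x by (rule mod_mult_left_eq)
  also have "\<dots> = (a * q ^ (P * h)) mod NN" by (simp only: mult.assoc e flip: power_add)
  also have "\<dots> = (a * (q ^ (P * h) mod NN)) mod NN" by (rule mod_mult_right_eq[symmetric])
  also have "\<dots> = a mod NN" unfolding X by (metis mod_mult_right_eq mult_1_right)
  finally have calc: "(x * q ^ (h * (P - 1))) mod NN = a mod NN" .
  show ?thesis unfolding cyc_coset_def
    by (rule CollectI, rule exI[of _ "h * (P - 1)"]) (use calc in simp)
qed

lemma cs_modN: "cs (a mod NN) = cs a"
  unfolding cyc_coset_def by (simp add: mod_mult_left_eq)

lemma cs_eq: "x \<in> cs a \<Longrightarrow> cs x = cs a"
proof -
  assume x: "x \<in> cs a"
  have 1: "cs x \<subseteq> cs a" using cs_trans[OF x] .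
  have "cs (a mod NN) \<subseteq> cs x" using cs_trans[OF cs_back[OF x]] .
  hence "cs a \<subseteq> cs x" by (simp only: cs_modN)
  thus ?thesis using 1 by (rule subset_antisym[rotated])
qed

lemma cs_disj: "cs a \<inter> cs b \<noteq> {} \<Longrightarrow> cs a = cs b"
proof -
  assume "cs a \<inter> cs b \<noteq> {}"
  then obtain y where y: "y \<in> cs a" "y \<in> cs b" by blast
  have "cs y = cs a" "cs y = cs b" using cs_eq[OF y(1)] cs_eq[OF y(2)] by auto
  thus ?thesis by simp
qed

lemma cs_mod_t: "x \<in> cs (1 + t * al) \<Longrightarrow> x mod t = 1 mod t"
proof -
  assume "x \<in> cs (1 + t * al)"
  then obtain h where x: "x = ((1 + t * al) * q ^ h) mod NN" unfolding cyc_coset_def by auto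
  have "x mod t = ((1 + t * al) * q ^ h) mod t"
    unfolding x by (simp add: mod_mod_cancel)
  also have "\<dots> = ((1 + t * al) mod t * (q ^ h mod t)) mod t" by (simp add: mod_mult_eq)
  also have "q ^ h mod t = 1 mod t" using q_mod_t by (metis power_mod power_one)
  also have "(1 + t * al) mod t = 1 mod t" by (metis mod_mult_self1 mult.commute)
  also have "(1 mod t * (1 mod t)) mod t = 1 mod t" by (simp add: mod_mult_eq)
  finally show ?thesis .
qed

definition RR :: "nat set" where "RR = {h. h < NN \<and> h mod t = 1 mod t}"

lemma RR_char: "h \<in> RR \<longleftrightarrow> (\<exists>i<n. h = (1 + t * i) mod NN)"
proof
  assume h: "h \<in> RR"
  show "\<exists>i<n. h = (1 + t * i) mod NN"
  proof (cases "h = 0")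
    case True
    hence "1 mod t = 0" using h by (simp add: RR_def)
    hence "t = 1" using t_pos by (cases "t = 1") auto
    thus ?thesis using True n_pos by (intro exI[of _ "n - 1"]) auto
  next
    case False
    have hm: "h mod t = 1 mod t" "1 \<le> h" using h False by (auto simp: RR_def)
    hence "t dvd h - 1" using mod_eq_dvd_iff_nat by blast
    hence "(h - 1) mod t = 0" by simp
    then obtain i where i: "h - 1 = t * i" by auto
    have hN: "h < NN" using h by (simp add: RR_def)
    have "t * i < t * n" using hN i False by linarith
    hence "i < n" using t_pos by simp
    moreover have "h = 1 + t * i" using i False by linarith
    hence "h = (1 + t * i) mod NN" using hN by simp
    ultimately show ?thesis by blast
  qed
next
  assume "\<exists>i<n. h = (1 + t * i) mod NN"
  then obtain i where h: "h = (1 + t * i) mod NN" by auto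
  have "h mod t = (1 + t * i) mod t" unfolding h by (simp add: mod_mod_cancel)
  also have "\<dots> = 1 mod t" by (metis mod_mult_self1 mult.commute)
  finally have "h mod t = 1 mod t" .
  thus "h \<in> RR" using h N_pos by (simp add: RR_def)
qed

lemma RR_bij: "bij_betw (\<lambda>i. (1 + t * i) mod NN) {..<n} RR"
proof -
  have "inj_on (\<lambda>i. (1 + t * i) mod NN) {..<n}"
  proof (rule inj_onI)
    fix i j assume ij: "i \<in> {..<n}" "j \<in> {..<n}" "(1 + t * i) mod NN = (1 + t * j) mod NN"
    hence "[1 + t * i = 1 + t * j] (mod NN)" by (simp add: cong_def)
    hence "[t * i = t * j] (mod t * n)" using cong_add_lcancel_nat[of 1 "t*i" "t*j" NN] by blast
    hence "t * (i mod n) = t * (j mod n)" by (simp add: cong_def mod_mult_mult1)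
    hence "i mod n = j mod n" using t_pos by simp
    thus "i = j" using ij by simp
  qed
  moreover have "(\<lambda>i. (1 + t * i) mod NN) ` {..<n} = RR" using RR_char by auto
  ultimately show ?thesis by (simp add: bij_betw_def)
qed

lemma RR_card: "card RR = n" using bij_betw_same_card[OF RR_bij] by simp
lemma RR_fin: "finite RR" by (simp add: RR_def)

lemma cs_sub_RR: "cs (1 + t * al) \<subseteq> RR"
proof
  fix x assume x: "x \<in> cs (1 + t * al)"
  have "x < NN" using x cs_sub[of "1 + t * al"] by auto
  thus "x \<in> RR" using cs_mod_t[OF x] by (simp add: RR_def)
qed

lemma root_pow: "h \<in> RR \<Longrightarrow> (\<zeta> ^ h) ^ n = emb lam"
proof -
  assume "h \<in> RR"
  then obtain i where h: "h = (1 + t * i) mod NN" using RR_char by auto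
  have "(\<zeta> ^ h) ^ n = (\<zeta> ^ (1 + t * i)) ^ n" using zeta_mod h by simp
  also have "\<dots> = \<zeta> ^ ((1 + t * i) * n)" by (simp only: power_mult)
  also have "(1 + t * i) * n = n + NN * i" by (simp add: algebra_simps)
  also have "\<zeta> ^ (n + NN * i) = \<zeta> ^ n * (\<zeta> ^ NN) ^ i" by (simp add: power_add power_mult)
  finally show ?thesis using zeta_N zeta_n by simp
qed

lemma cs_frob_bij: "bij_betw (\<lambda>h. (h * q) mod NN) (cs a) (cs a)"
proof -
  have inj: "inj_on (\<lambda>h. (h * q) mod NN) (cs a)"
  proof (rule inj_onI)
    fix x y assume xy: "x \<in> cs a" "y \<in> cs a" "(x * q) mod NN = (y * q) mod NN"
    hence "[x * q = y * q] (mod NN)" by (simp add: cong_def)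
    hence "[x = y] (mod NN)" using cop_qN cong_mult_rcancel_nat by blast
    moreover have "x < NN" "y < NN" using xy cs_sub[of a] by auto
    ultimately show "x = y" by (simp add: cong_def)
  qed
  have "(\<lambda>h. (h * q) mod NN) ` cs a \<subseteq> cs a" using cs_mulq by auto
  hence "(\<lambda>h. (h * q) mod NN) ` cs a = cs a" using inj cs_fin by (intro endo_inj_surj) auto
  thus ?thesis using inj by (simp add: bij_betw_def)
qed

end


context cc begin

sublocale mpi: map_poly_inj_idom_hom emb ..

abbreviation "MM \<equiv> cmodulus lam n"

definition lin :: "'b \<Rightarrow> 'b poly" where "lin z = [:- z, 1:]"
definition PP :: "nat set \<Rightarrow> 'b poly" where "PP A = (\<Prod>h\<in>A. lin (\<zeta> ^ h))"

lemma PP_deg: "finite A \<Longrightarrow> degree (PP A) = card A"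
  unfolding PP_def by (subst degree_prod_eq_sum_degree) (auto simp: lin_def)

lemma PP_lc: "lead_coeff (PP A) = 1"
  unfolding PP_def lead_coeff_prod by (simp add: lin_def)

lemma PP_nz: "PP A \<noteq> 0"
proof
  assume "PP A = 0"
  hence "lead_coeff (PP A) = 0" by simp
  thus False using PP_lc[of A] by simp
qed

lemma poly_PP: "poly (PP A) x = (\<Prod>h\<in>A. x - \<zeta> ^ h)"
  unfolding PP_def poly_prod by (simp add: lin_def)

lemma poly_PP0: "finite A \<Longrightarrow> h \<in> A \<Longrightarrow> poly (PP A) (\<zeta> ^ h) = 0"
  unfolding poly_PP by (rule prod_zero) auto

lemma poly_PP_nz: "finite A \<Longrightarrow> h < NN \<Longrightarrow> h \<notin> A \<Longrightarrow> A \<subseteq> {..<NN} \<Longrightarrow> poly (PP A) (\<zeta> ^ h) \<noteq> 0"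
  unfolding poly_PP using zeta_inj by (auto simp: prod_zero_iff)

lemma M_map: "map_poly emb MM = monom 1 n - [:emb lam:]"
  by (simp add: cmodulus_def hom_distribs emb_one)

lemma MM_coeff_n: "coeff MM n = 1"
  using n_pos by (simp add: cmodulus_def coeff_monom coeff_const)

lemma MM_deg: "degree MM = n"
proof (rule antisym)
  show "degree MM \<le> n" unfolding cmodulus_def
    by (intro degree_diff_le) (auto simp: degree_monom_le)
  show "n \<le> degree MM" using MM_coeff_n by (intro le_degree) simp
qed

lemma MM_nz: "MM \<noteq> 0" using MM_coeff_n by auto

lemma M_prod: "map_poly emb MM = PP RR"
proof (rule poly_eqI_degree_lead_coeff[where n = n and A = "(\<lambda>h. \<zeta> ^ h) ` RR"])
  show "coeff (map_poly emb MM) n = coeff (PP RR) n"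
    using PP_lc[of RR] PP_deg[OF RR_fin] RR_card MM_coeff_n by (simp add: emb_one)
  have "inj_on (\<lambda>h. \<zeta> ^ h) RR" using zeta_inj by (auto simp: inj_on_def RR_def)
  thus "n \<le> card ((\<lambda>h. \<zeta> ^ h) ` RR)" using RR_card by (simp add: card_image)
  show "degree (map_poly emb MM) \<le> n" using MM_deg by simp
  show "degree (PP RR) \<le> n" using PP_deg[OF RR_fin] RR_card by simp
  fix z assume "z \<in> (\<lambda>h. \<zeta> ^ h) ` RR"
  then obtain h where h: "h \<in> RR" "z = \<zeta> ^ h" by auto
  show "poly (map_poly emb MM) z = poly (PP RR) z"
    using h root_pow[OF h(1)] poly_PP0[OF RR_fin h(1)] by (simp add: M_map poly_monom)
qed

lemma mp_inj: "map_poly emb p1 = map_poly emb p2 \<Longrightarrow> p1 = p2"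
  by (rule mpi.injectivity)

abbreviation "Cs al \<equiv> cs (1 + t * al)"

lemma fr_lin: "map_poly fr (lin z) = lin (z ^ q)"
proof -
  have "map_poly fr (lin z) = [:fr (- z), fr 1:]"
    unfolding lin_def by (intro poly_eqI) (auto simp: coeff_map_poly coeff_pCons split: nat.split)
  also have "\<dots> = lin (z ^ q)" unfolding lin_def frh.hom_uminus frh.hom_one by (simp add: fr_def)
  finally show ?thesis .
qed

lemma PP_frob: "map_poly fr (PP (Cs al)) = PP (Cs al)"
proof -
  have "map_poly fr (PP (Cs al)) = (\<Prod>h\<in>Cs al. lin ((\<zeta> ^ h) ^ q))"
    unfolding PP_def by (simp add: mpfr.hom_prod fr_lin)
  also have "\<dots> = (\<Prod>h\<in>Cs al. lin (\<zeta> ^ ((h * q) mod NN)))"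
    by (intro prod.cong refl) (metis power_mult zeta_mod)
  also have "\<dots> = (\<Prod>h\<in>Cs al. lin (\<zeta> ^ h))"
    using prod.reindex_bij_betw[OF cs_frob_bij[of "1 + t * al"], of "\<lambda>h. lin (\<zeta> ^ h)"] by simp
  finally show ?thesis unfolding PP_def .
qed

lemma PP_coeffs_range: "coeff (PP (Cs al)) i \<in> range emb"
proof -
  have "fr (coeff (PP (Cs al)) i) = coeff (PP (Cs al)) i"
    using arg_cong[OF PP_frob[of al], of "\<lambda>p. coeff p i"] by (simp add: coeff_map_poly)
  thus ?thesis using fixed_range by (simp add: fr_def)
qed

lemma minpoly_ex: "\<exists>p. map_poly emb p = PP (Cs al)"
proof -
  let ?P = "PP (Cs al)"
  let ?iv = "inv_into UNIV emb"
  have i0: "?iv 0 = 0" using emb_inj by (metis hom_zero inv_into_f_f UNIV_I)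
  have "map_poly emb (map_poly ?iv ?P) = ?P"
  proof (rule poly_eqI)
    fix i
    show "coeff (map_poly emb (map_poly ?iv ?P)) i = coeff ?P i"
      using PP_coeffs_range[of al i] i0 by (simp add: coeff_map_poly f_inv_into_f)
  qed
  thus ?thesis by blast
qed

definition mpol :: "nat \<Rightarrow> 'a poly" where "mpol al = min_poly_coset emb \<zeta> q t n al"

lemma mpol_map: "map_poly emb (mpol al) = PP (Cs al)"
proof -
  obtain p where p: "map_poly emb p = PP (Cs al)" using minpoly_ex by blast
  have "map_poly emb (THE p. map_poly emb p = PP (Cs al)) = PP (Cs al)"
    by (rule theI[of _ p]) (use p in \<open>auto intro: mp_inj\<close>)
  thus ?thesis unfolding mpol_def min_poly_coset_def PP_def lin_def by simp
qed

lemma mpol_deg: "degree (mpol al) = card (Cs al)"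
  using arg_cong[OF mpol_map[of al], of degree] PP_deg[OF cs_fin] by simp

lemma mpol_nz: "mpol al \<noteq> 0" using mpol_map[of al] PP_nz by auto

definition gpol :: "nat \<Rightarrow> 'a poly" where "gpol al = MM div mpol al"

lemma PP_split: "PP RR = PP (Cs al) * PP (RR - Cs al)"
  unfolding PP_def using prod.subset_diff[OF cs_sub_RR RR_fin] by (simp add: mult.commute)

lemma mpol_dvd: "mpol al dvd MM"
proof -
  have "map_poly emb (mpol al) dvd map_poly emb MM"
    unfolding mpol_map M_prod PP_split[of al] by simp
  thus ?thesis by (rule dvd_map_poly_hom_imp_dvd)
qed

lemma gpol_mult: "gpol al * mpol al = MM"
  unfolding gpol_def using mpol_dvd by simp

lemma gpol_map: "map_poly emb (gpol al) = PP (RR - Cs al)"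
  unfolding gpol_def map_poly_div mpol_map M_prod PP_split[of al] using PP_nz[of "Cs al"] by simp

lemma gpol_nz: "gpol al \<noteq> 0"
proof
  assume "gpol al = 0"
  hence "MM = 0" using gpol_mult[of al] by simp
  thus False using MM_nz by simp
qed

end


lemma card_polys_deg_lt:
  assumes "0 < d"
  shows "card {r :: 'a::{field,finite} poly. degree r < d} = CARD('a) ^ d"
proof -
  have bij: "bij_betw Poly {xs :: 'a list. set xs \<subseteq> UNIV \<and> length xs = d} {r. degree r < d}"
  proof (rule bij_betwI')
    fix xs ys :: "'a list"
    assume xs: "xs \<in> {xs. set xs \<subseteq> UNIV \<and> length xs = d}" and ys: "ys \<in> {xs. set xs \<subseteq> UNIV \<and> length xs = d}"
    show "(Poly xs = Poly ys) = (xs = ys)"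
    proof
      assume h: "Poly xs = Poly ys"
      show "xs = ys"
      proof (rule nth_equalityI)
        show "length xs = length ys" using xs ys by simp
        fix i assume "i < length xs"
        hence "coeff (Poly xs) i = xs ! i" "coeff (Poly ys) i = ys ! i"
          using xs ys by (auto simp: nth_default_def)
        thus "xs ! i = ys ! i" using h by simp
      qed
    qed simp
  next
    fix xs :: "'a list" assume xs: "xs \<in> {xs. set xs \<subseteq> UNIV \<and> length xs = d}"
    have "degree (Poly xs) \<le> length xs - 1"
    proof (rule degree_le)
      show "\<forall>i>length xs - 1. coeff (Poly xs) i = 0" using assms xs by (auto simp: nth_default_def)
    qed
    thus "Poly xs \<in> {r. degree r < d}" using xs assms by auto
  next
    fix r :: "'a poly" assume r: "r \<in> {r. degree r < d}"
    have m: "map (coeff r) [0..<d] \<in> {xs. set xs \<subseteq> UNIV \<and> length xs = d}" by simp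
    have "Poly (map (coeff r) [0..<d]) = r"
    proof (rule poly_eqI)
      fix i show "coeff (Poly (map (coeff r) [0..<d])) i = coeff r i"
        using r by (auto simp: nth_default_def coeff_eq_0)
    qed
    thus "\<exists>xs\<in>{xs. set xs \<subseteq> UNIV \<and> length xs = d}. r = Poly xs" using m by metis
  qed
  have "card {r :: 'a poly. degree r < d} = card {xs :: 'a list. set xs \<subseteq> UNIV \<and> length xs = d}"
    using bij_betw_same_card[OF bij] by simp
  also have "\<dots> = CARD('a) ^ d" by (rule card_lists_length_eq) simp
  finally show ?thesis .
qed

context cc begin

abbreviation "II al \<equiv> irr_code emb \<zeta> lam q t n al"

lemma II_def': "II al = {(gpol al * f) mod MM | f. True}"
  unfolding irr_code_def gpol_def mpol_def ..

definition ev :: "'b \<Rightarrow> 'a poly \<Rightarrow> 'b" where "ev z c = poly (map_poly emb c) z"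

lemma ev_add: "ev z (c1 + c2) = ev z c1 + ev z c2" by (simp add: ev_def hom_distribs)
lemma ev_diff: "ev z (c1 - c2) = ev z c1 - ev z c2" by (simp add: ev_def hom_distribs)
lemma ev_mult: "ev z (c1 * c2) = ev z c1 * ev z c2" by (simp add: ev_def hom_distribs)
lemma ev_0: "ev z 0 = 0" by (simp add: ev_def)
lemma ev_X: "ev z (monom 1 1) = z" by (simp add: ev_def poly_monom emb_one)
lemma ev_X': "ev z (monom 1 (Suc 0)) = z" by (simp add: ev_def poly_monom emb_one)

lemma ev_mod: "h \<in> RR \<Longrightarrow> ev (\<zeta> ^ h) (c mod MM) = ev (\<zeta> ^ h) c"
proof -
  assume h: "h \<in> RR"
  have r: "poly (map_poly emb MM) (\<zeta> ^ h) = 0" using M_prod poly_PP0[OF RR_fin h] by simp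
  let ?x = "map_poly emb c" and ?M = "map_poly emb MM"
  have "?x = (?x div ?M) * ?M + ?x mod ?M" by (rule div_mult_mod_eq[symmetric])
  hence "poly ?x (\<zeta> ^ h) = poly ((?x div ?M) * ?M + ?x mod ?M) (\<zeta> ^ h)" by metis
  also have "\<dots> = poly (?x mod ?M) (\<zeta> ^ h)" using r by simp
  finally show ?thesis unfolding ev_def map_poly_mod by simp
qed

lemma II_vanish: "c \<in> II al \<Longrightarrow> h \<in> RR - Cs al \<Longrightarrow> ev (\<zeta> ^ h) c = 0"
proof -
  assume c: "c \<in> II al" and h: "h \<in> RR - Cs al"
  then obtain f where f: "c = (gpol al * f) mod MM" unfolding II_def' by auto
  have "ev (\<zeta> ^ h) (gpol al) = 0" unfolding ev_def gpol_map
    using h by (intro poly_PP0) (auto simp: RR_fin)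
  thus ?thesis using h f ev_mod[of h "gpol al * f"] by (simp add: ev_mult)
qed

lemma II_0: "0 \<in> II al" unfolding II_def' by (auto intro!: exI[of _ 0])

lemma II_add: "c1 \<in> II al \<Longrightarrow> c2 \<in> II al \<Longrightarrow> c1 + c2 \<in> II al"
proof -
  assume "c1 \<in> II al" "c2 \<in> II al"
  then obtain f1 f2 where "c1 = (gpol al * f1) mod MM" "c2 = (gpol al * f2) mod MM"
    unfolding II_def' by auto
  hence "c1 + c2 = (gpol al * (f1 + f2)) mod MM" by (simp add: poly_mod_add_left distrib_left)
  thus ?thesis unfolding II_def' by auto
qed

lemma II_diff: "c1 \<in> II al \<Longrightarrow> c2 \<in> II al \<Longrightarrow> c1 - c2 \<in> II al"
proof -
  assume "c1 \<in> II al" "c2 \<in> II al"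
  then obtain f1 f2 where "c1 = (gpol al * f1) mod MM" "c2 = (gpol al * f2) mod MM"
    unfolding II_def' by auto
  hence "c1 - c2 = (gpol al * (f1 - f2)) mod MM" by (simp add: poly_mod_diff_left right_diff_distrib)
  thus ?thesis unfolding II_def' by auto
qed

abbreviation "RH \<equiv> rho lam n"

lemma II_rho: "c \<in> II al \<Longrightarrow> RH c \<in> II al"
proof -
  assume "c \<in> II al"
  then obtain f where f: "c = (gpol al * f) mod MM" unfolding II_def' by auto
  have "RH c = (monom 1 1 * (gpol al * f)) mod MM" unfolding rho_def f by (rule mod_mult_right_eq)
  also have "\<dots> = (gpol al * (monom 1 1 * f)) mod MM" by (simp add: ac_simps)
  finally show ?thesis unfolding II_def' by auto
qed

lemma rho_add: "RH (c1 + c2) = RH c1 + RH c2"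
  unfolding rho_def by (simp add: distrib_left poly_mod_add_left)

lemma rho_diff: "RH (c1 - c2) = RH c1 - RH c2"
  unfolding rho_def by (simp add: right_diff_distrib poly_mod_diff_left)

lemma ev_rho: "h \<in> RR \<Longrightarrow> ev (\<zeta> ^ h) (RH c) = \<zeta> ^ h * ev (\<zeta> ^ h) c"
  unfolding rho_def using ev_mod by (simp add: ev_mult ev_X ev_X')

lemma ev_rho_pow: "h \<in> RR \<Longrightarrow> ev (\<zeta> ^ h) ((RH ^^ j) c) = (\<zeta> ^ h) ^ j * ev (\<zeta> ^ h) c"
  by (induction j) (auto simp: ev_rho)

lemma II_deg: "c \<in> II al \<Longrightarrow> degree c < n"
proof -
  assume "c \<in> II al"
  then obtain f where f: "c = (gpol al * f) mod MM" unfolding II_def' by auto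
  show ?thesis
  proof (cases "c = 0")
    case False thus ?thesis using f degree_mod_less'[OF MM_nz] MM_deg by auto
  qed (use n_pos in simp)
qed

lemma ev_frob: "ev (z ^ q) c = (ev z c) ^ q"
proof -
  have "map_poly fr (map_poly emb c) = map_poly emb c"
    by (intro poly_eqI) (simp add: coeff_map_poly fr_def emb_fix)
  hence "fr (ev z c) = ev (fr z) c" unfolding ev_def
    using frh.poly_map_poly[where p = "map_poly emb c" and x = z] by simp
  thus ?thesis by (simp add: fr_def)
qed

lemma ev_frob_pow: "ev (\<zeta> ^ (a * q ^ k)) c = (ev (\<zeta> ^ a) c) ^ (q ^ k)"
proof (induction k)
  case (Suc k)
  have "a * q ^ Suc k = (a * q ^ k) * q" by (simp add: power_Suc2 mult.assoc)
  hence "\<zeta> ^ (a * q ^ Suc k) = (\<zeta> ^ (a * q ^ k)) ^ q" by (simp only: power_mult)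
  hence "ev (\<zeta> ^ (a * q ^ Suc k)) c = (ev (\<zeta> ^ a) c ^ q ^ k) ^ q" using Suc ev_frob by simp
  also have "\<dots> = ev (\<zeta> ^ a) c ^ (q ^ k * q)" by (simp only: power_mult)
  finally show ?case by (simp add: power_Suc2 mult.commute)
qed simp

lemma II_zero: "c \<in> II al \<Longrightarrow> ev (\<zeta> ^ (1 + t * al)) c = 0 \<Longrightarrow> c = 0"
proof -
  assume c: "c \<in> II al" and e: "ev (\<zeta> ^ (1 + t * al)) c = 0"
  have all: "ev (\<zeta> ^ h) c = 0" if h: "h \<in> RR" for h
  proof (cases "h \<in> Cs al")
    case True
    then obtain k where k: "h = ((1 + t * al) * q ^ k) mod NN" unfolding cyc_coset_def by auto
    have "ev (\<zeta> ^ h) c = ev (\<zeta> ^ ((1 + t * al) * q ^ k)) c" using k zeta_mod by metis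
    also have "\<dots> = (ev (\<zeta> ^ (1 + t * al)) c) ^ (q ^ k)" by (rule ev_frob_pow)
    also have "\<dots> = 0" unfolding e using q_ge2 by simp
    finally show ?thesis .
  next
    case False thus ?thesis using II_vanish[OF c] h by auto
  qed
  have "map_poly emb c = 0"
  proof (rule poly_eqI_degree[where A = "(\<lambda>h. \<zeta> ^ h) ` RR"])
    fix z assume "z \<in> (\<lambda>h. \<zeta> ^ h) ` RR"
    thus "poly (map_poly emb c) z = poly 0 z" using all by (auto simp: ev_def)
  next
    have "inj_on (\<lambda>h. \<zeta> ^ h) RR" using zeta_inj by (auto simp: inj_on_def RR_def)
    hence "card ((\<lambda>h. \<zeta> ^ h) ` RR) = n" using RR_card by (simp add: card_image)
    thus "degree (map_poly emb c) < card ((\<lambda>h. \<zeta> ^ h) ` RR)" "degree (0::'b poly) < card ((\<lambda>h. \<zeta> ^ h) ` RR)"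
      using II_deg[OF c] n_pos by auto
  qed
  thus ?thesis using mp_inj[of c 0] by simp
qed

lemma Cs_ne: "card (Cs al) > 0"
  using cs_self[of "1 + t * al"] cs_fin[of "1 + t * al"] by (auto simp: card_gt_0_iff)

lemma II_image: "II al = (\<lambda>r. gpol al * r) ` {r. degree r < card (Cs al)}"
proof -
  let ?g = "gpol al" and ?m = "mpol al"
  have key: "(?g * f) mod MM = ?g * (f mod ?m)" for f
    using gpol_mult[of al] mod_mult_mult1[of ?g f ?m] by simp
  show ?thesis
  proof
    show "II al \<subseteq> (\<lambda>r. ?g * r) ` {r. degree r < card (Cs al)}"
    proof
      fix c assume "c \<in> II al"
      then obtain f where f: "c = (?g * f) mod MM" unfolding II_def' by auto
      have "degree (f mod ?m) < card (Cs al)"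
        using degree_mod_less[OF mpol_nz, of f al] mpol_deg[of al] Cs_ne[of al] by auto
      thus "c \<in> (\<lambda>r. ?g * r) ` {r. degree r < card (Cs al)}" using f key by auto
    qed
    show "(\<lambda>r. ?g * r) ` {r. degree r < card (Cs al)} \<subseteq> II al"
    proof
      fix c assume "c \<in> (\<lambda>r. ?g * r) ` {r. degree r < card (Cs al)}"
      then obtain r where r: "degree r < card (Cs al)" "c = ?g * r" by auto
      have "r mod ?m = r" using r mpol_deg[of al] by (intro mod_poly_less) simp
      hence "c = (?g * r) mod MM" using key r by simp
      thus "c \<in> II al" unfolding II_def' by auto
    qed
  qed
qed

lemma II_card: "card (II al) = q ^ card (Cs al)"
proof -
  have "inj_on (\<lambda>r. gpol al * r) {r. degree r < card (Cs al)}"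
    using gpol_nz[of al] by (auto simp: inj_on_def)
  hence "card (II al) = card {r :: 'a poly. degree r < card (Cs al)}"
    unfolding II_image by (simp add: card_image)
  also have "\<dots> = q ^ card (Cs al)" using card_polys_deg_lt[OF Cs_ne[of al]] q_def by simp
  finally show ?thesis .
qed

lemma II_fin: "finite (II al)"
  using II_card[of al] q_ge2 by (intro card_ge_0_finite) simp

end


definition orb :: "('x \<Rightarrow> 'x) \<Rightarrow> 'x \<Rightarrow> 'x set" where
  "orb f x = {(f ^^ j) x | j. True}"

lemma funpow_mod:
  assumes "(f ^^ P) x = x"
  shows "(f ^^ k) x = (f ^^ (k mod P)) x"
proof -
  have "(f ^^ (P * m)) x = x" for m
    by (induction m) (auto simp: funpow_add assms)
  have "k = k mod P + P * (k div P)" by simp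
  hence "(f ^^ k) x = (f ^^ (k mod P)) ((f ^^ (P * (k div P))) x)" by (metis funpow_add comp_apply)
  thus ?thesis using \<open>\<And>m. (f ^^ (P * m)) x = x\<close> by simp
qed

lemma orb_self: "x \<in> orb f x" unfolding orb_def by (auto intro!: exI[of _ 0])

lemma orb_sub: "(\<And>y. y \<in> X \<Longrightarrow> f y \<in> X) \<Longrightarrow> x \<in> X \<Longrightarrow> orb f x \<subseteq> X"
proof
  fix y assume inv: "\<And>y. y \<in> X \<Longrightarrow> f y \<in> X" and x: "x \<in> X" and "y \<in> orb f x"
  then obtain j where "y = (f ^^ j) x" unfolding orb_def by auto
  moreover have "(f ^^ j) x \<in> X" for j by (induction j) (auto simp: x inv)
  ultimately show "y \<in> X" by simp
qed

lemma orb_trans: "y \<in> orb f x \<Longrightarrow> orb f y \<subseteq> orb f x"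
proof
  fix z assume "y \<in> orb f x" "z \<in> orb f y"
  then obtain j k where y: "y = (f ^^ j) x" and z: "z = (f ^^ k) y" unfolding orb_def by auto
  have "z = (f ^^ (k + j)) x" unfolding z y by (simp add: funpow_add)
  thus "z \<in> orb f x" unfolding orb_def by auto
qed

lemma orb_back:
  assumes "0 < P" "(f ^^ P) x = x" "y \<in> orb f x"
  shows "x \<in> orb f y"
proof -
  obtain j where y: "y = (f ^^ j) x" using assms(3) unfolding orb_def by auto
  have "(f ^^ (P - j mod P)) y = (f ^^ (P - j mod P + j)) x" by (simp add: y funpow_add)
  also have "\<dots> = (f ^^ ((P - j mod P + j) mod P)) x" using funpow_mod[OF assms(2)] by blast
  also have "(P - j mod P + j) mod P = 0"
  proof -
    have j1: "j mod P < P" using assms(1) by simp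
    have j2: "j = P * (j div P) + j mod P" by simp
    have j3: "P * Suc (j div P) = P + P * (j div P)" by simp
    have "P - j mod P + j = P * (Suc (j div P))" using j1 j2 j3 by linarith
    thus ?thesis by simp
  qed
  finally show ?thesis unfolding orb_def by auto
qed

lemma orb_eq:
  assumes "0 < P" "(f ^^ P) x = x" "y \<in> orb f x"
  shows "orb f y = orb f x"
  using orb_trans[OF assms(3)] orb_trans[OF orb_back[OF assms]] by blast

lemma orb_card:
  assumes "0 < P" "(f ^^ P) x = x"
  shows "card (orb f x) = (LEAST k. 0 < k \<and> (f ^^ k) x = x)"
proof -
  define m where "m = (LEAST k. 0 < k \<and> (f ^^ k) x = x)"
  have m: "0 < m" "(f ^^ m) x = x" using LeastI[of "\<lambda>k. 0 < k \<and> (f ^^ k) x = x", OF conjI[OF assms]]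
    unfolding m_def by auto
  have mmin: "\<And>k. 0 < k \<Longrightarrow> k < m \<Longrightarrow> (f ^^ k) x \<noteq> x"
    using not_less_Least unfolding m_def by blast
  have "orb f x = (\<lambda>j. (f ^^ j) x) ` {..<m}"
  proof
    show "orb f x \<subseteq> (\<lambda>j. (f ^^ j) x) ` {..<m}"
    proof
      fix y assume "y \<in> orb f x"
      then obtain j where "y = (f ^^ j) x" unfolding orb_def by auto
      hence "y = (f ^^ (j mod m)) x" using funpow_mod[OF m(2)] by simp
      thus "y \<in> (\<lambda>j. (f ^^ j) x) ` {..<m}" using m(1) by auto
    qed
  qed (auto simp: orb_def)
  moreover have "inj_on (\<lambda>j. (f ^^ j) x) {..<m}"
  proof (rule inj_onI)
    fix i j assume ij: "i \<in> {..<m}" "j \<in> {..<m}" "(f ^^ i) x = (f ^^ j) x"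
    show "i = j"
    proof (rule ccontr)
      assume "i \<noteq> j"
      then consider "i < j" | "j < i" by linarith
      thus False
      proof cases
        case 1
        have "(f ^^ (m - j + i)) x = (f ^^ (m - j)) ((f ^^ i) x)" by (simp add: funpow_add)
        also have "\<dots> = (f ^^ (m - j + j)) x" using ij(3) by (simp add: funpow_add)
        also have "\<dots> = x" using ij m by simp
        finally have A: "(f ^^ (m - j + i)) x = x" .
        have "0 < m - j + i" "m - j + i < m" using ij 1 by auto
        thus False using mmin[of "m - j + i"] A by simp
      next
        case 2
        have "(f ^^ (m - i + j)) x = (f ^^ (m - i)) ((f ^^ j) x)" by (simp add: funpow_add)
        also have "\<dots> = (f ^^ (m - i + i)) x" using ij(3) by (simp add: funpow_add)
        also have "\<dots> = x" using ij m by simp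
        finally have A: "(f ^^ (m - i + j)) x = x" .
        have "0 < m - i + j" "m - i + j < m" using ij 2 by auto
        thus False using mmin[of "m - i + j"] A by simp
      qed
    qed
  qed
  ultimately show ?thesis unfolding m_def[symmetric] by (simp add: card_image)
qed

lemma orb_fin:
  assumes "0 < P" "(f ^^ P) x = x"
  shows "finite (orb f x)" "0 < card (orb f x)"
proof -
  have "orb f x \<subseteq> (\<lambda>j. (f ^^ j) x) ` {..<P}"
  proof
    fix y assume "y \<in> orb f x"
    then obtain j where "y = (f ^^ j) x" unfolding orb_def by auto
    hence "y = (f ^^ (j mod P)) x" using funpow_mod[OF assms(2)] by simp
    thus "y \<in> (\<lambda>j. (f ^^ j) x) ` {..<P}" using assms(1) by auto
  qed
  thus f: "finite (orb f x)" using finite_subset by blast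
  show "0 < card (orb f x)" using f orb_self[of x f] by (auto simp: card_gt_0_iff)
qed

lemma orbit_count:
  assumes fin: "finite X" and inv: "\<And>x. x \<in> X \<Longrightarrow> f x \<in> X"
    and per: "\<And>x. x \<in> X \<Longrightarrow> \<exists>P>0. (f ^^ P) x = x"
  shows "real (card (orb f ` X)) = (\<Sum>x\<in>X. 1 / real (card (orb f x)))"
proof -
  have grp: "{x \<in> X. orb f x = Ob} = Ob" if Ob: "Ob \<in> orb f ` X" for Ob
  proof -
    obtain y where y: "y \<in> X" "Ob = orb f y" using Ob by auto
    obtain P where P: "0 < P" "(f ^^ P) y = y" using per[OF y(1)] by auto
    show ?thesis
    proof
      show "{x \<in> X. orb f x = Ob} \<subseteq> Ob"
      proof
        fix z assume "z \<in> {x \<in> X. orb f x = Ob}"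
        hence "orb f z = Ob" by simp
        thus "z \<in> Ob" using orb_self[of z f] by simp
      qed
      show "Ob \<subseteq> {x \<in> X. orb f x = Ob}"
      proof
        fix z assume z: "z \<in> Ob"
        have "orb f y \<subseteq> X" by (rule orb_sub[where X=X and f=f and x=y]) (use inv y(1) in auto)
        hence "z \<in> X" using z y(2) by auto
        moreover have "orb f z = Ob" using orb_eq[OF P, of z] z y(2) by simp
        ultimately show "z \<in> {x \<in> X. orb f x = Ob}" by simp
      qed
    qed
  qed
  have "(\<Sum>x\<in>X. 1 / real (card (orb f x))) =
        (\<Sum>Ob\<in>orb f ` X. \<Sum>x\<in>{x \<in> X. orb f x = Ob}. 1 / real (card (orb f x)))"
    by (rule sum.image_gen[OF fin])
  also have "\<dots> = (\<Sum>Ob\<in>orb f ` X. \<Sum>x\<in>Ob. 1 / real (card Ob))"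
  proof (rule sum.cong[OF refl])
    fix Ob assume Ob: "Ob \<in> orb f ` X"
    have e: "{x \<in> X. orb f x = Ob} = Ob" by (rule grp[OF Ob])
    have "(\<Sum>x\<in>{x \<in> X. orb f x = Ob}. 1 / real (card (orb f x))) = (\<Sum>x\<in>{x \<in> X. orb f x = Ob}. 1 / real (card Ob))"
      by (rule sum.cong) auto
    thus "(\<Sum>x\<in>{x \<in> X. orb f x = Ob}. 1 / real (card (orb f x))) = (\<Sum>x\<in>Ob. 1 / real (card Ob))"
      by (simp only: e)
  qed
  also have "\<dots> = (\<Sum>Ob\<in>orb f ` X. 1)"
  proof (intro sum.cong refl)
    fix Ob assume Ob: "Ob \<in> orb f ` X"
    then obtain y where y: "y \<in> X" "Ob = orb f y" by auto
    obtain P where P: "0 < P" "(f ^^ P) y = y" using per[OF y(1)] by auto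
    have c: "0 < card Ob" using orb_fin[OF P] y by simp
    have "(\<Sum>x\<in>Ob. 1 / real (card Ob)) = of_nat (card Ob) * (1 / real (card Ob))" by (rule sum_constant)
    thus "(\<Sum>x\<in>Ob. 1 / real (card Ob)) = 1" using c by simp
  qed
  finally show ?thesis by simp
qed

lemma least_dvd:
  fixes m g :: nat
  assumes "0 < m"
  shows "(LEAST k. 0 < k \<and> m dvd g * k) = m div gcd m g"
proof (rule Least_equality)
  define d where "d = gcd m g"
  have d0: "0 < d" using assms by (simp add: d_def)
  obtain m' g' where mg: "m = d * m'" "g = d * g'" unfolding d_def
    by (meson gcd_dvd1 gcd_dvd2 dvdE)
  have "d * gcd m' g' = gcd m g" unfolding mg by (simp add: gcd_mult_distrib_nat)
  hence "d * gcd m' g' = d * 1" unfolding d_def by simp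
  hence "gcd m' g' = 1" using d0 by simp
  hence cop: "coprime m' g'" by (simp add: coprime_iff_gcd_eq_1)
  have md: "m div d = m'" using mg d0 by simp
  have iff: "m dvd g * k \<longleftrightarrow> m' dvd k" for k
  proof -
    have "m dvd g * k \<longleftrightarrow> m' dvd g' * k" using mg d0 by (simp add: mult.assoc)
    also have "\<dots> \<longleftrightarrow> m' dvd k" using cop by (simp add: coprime_dvd_mult_right_iff)
    finally show ?thesis .
  qed
  have m'0: "0 < m'" using mg assms by simp
  show "0 < m div gcd m g \<and> m dvd g * (m div gcd m g)"
    using iff md m'0 unfolding d_def by simp
  fix y assume "0 < y \<and> m dvd g * y"
  thus "m div gcd m g \<le> y" using iff md unfolding d_def by (auto intro: dvd_imp_le)
qed


context cc begin

lemma rho_explicit: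
  assumes "degree c < n"
  shows "RH c = monom 1 1 * c - smult (coeff c (n - 1)) MM"
proof -
  let ?k = "coeff c (n - 1)"
  let ?r = "monom 1 1 * c - smult ?k MM"
  have cr: "coeff ?r i = (if i = 0 then 0 else coeff c (i - 1)) - ?k * ((if i = n then 1 else 0) - (if i = 0 then lam else 0))" for i
    using n_pos by (simp add: coeff_monom_mult cmodulus_def coeff_monom coeff_const)
  have dr: "degree ?r < n"
  proof (rule deg_lt_coeff[OF n_pos])
    fix i assume i: "n \<le> i"
    show "coeff ?r i = 0"
    proof (cases "i = n")
      case True thus ?thesis using cr[of i] n_pos by simp
    next
      case False
      hence "coeff c (i - 1) = 0" using i assms by (intro coeff_eq_0) linarith
      thus ?thesis using cr[of i] False i n_pos by simp
    qed
  qed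
  have "monom 1 1 * c = ?r + smult ?k MM" by simp
  hence "RH c = (?r + [:?k:] * MM) mod MM" unfolding rho_def by simp
  also have "\<dots> = ?r mod MM" by (metis mod_mult_self1 mult.commute)
  also have "\<dots> = ?r" using dr MM_deg by (intro mod_poly_less) simp
  finally show ?thesis .
qed

lemma rho_coeff:
  assumes "degree c < n" "j < n"
  shows "coeff (RH c) j = (if j = 0 then lam * coeff c (n - 1) else coeff c (j - 1))"
  using assms n_pos unfolding rho_explicit[OF assms(1)]
  by (auto simp: coeff_monom_mult cmodulus_def coeff_monom coeff_const)

lemma rho_deg: "degree c < n \<Longrightarrow> degree (RH c) < n"
  unfolding rho_def using degree_mod_less[OF MM_nz, of "monom 1 1 * c"] MM_deg n_pos by auto

lemma rho_wt: "degree c < n \<Longrightarrow> hamming_wt n (RH c) = hamming_wt n c"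
proof -
  assume d: "degree c < n"
  define sg where "sg i = (if Suc i = n then 0 else Suc i)" for i
  have inj: "inj_on sg {..<n}" by (auto simp: inj_on_def sg_def split: if_splits)
  have img: "{j. j < n \<and> coeff (RH c) j \<noteq> 0} = sg ` {i. i < n \<and> coeff c i \<noteq> 0}"
  proof
    show "{j. j < n \<and> coeff (RH c) j \<noteq> 0} \<subseteq> sg ` {i. i < n \<and> coeff c i \<noteq> 0}"
    proof
      fix j assume j: "j \<in> {j. j < n \<and> coeff (RH c) j \<noteq> 0}"
      show "j \<in> sg ` {i. i < n \<and> coeff c i \<noteq> 0}"
      proof (cases "j = 0")
        case True
        hence "coeff c (n - 1) \<noteq> 0" using j rho_coeff[OF d, of j] by auto
        moreover have "sg (n - 1) = j" using True n_pos by (simp add: sg_def)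
        ultimately show ?thesis using n_pos by (intro image_eqI[of _ _ "n - 1"]) auto
      next
        case False
        hence "coeff c (j - 1) \<noteq> 0" using j rho_coeff[OF d, of j] by auto
        moreover have "sg (j - 1) = j" using False j by (simp add: sg_def)
        ultimately show ?thesis using j by (intro image_eqI[of _ _ "j - 1"]) auto
      qed
    qed
    show "sg ` {i. i < n \<and> coeff c i \<noteq> 0} \<subseteq> {j. j < n \<and> coeff (RH c) j \<noteq> 0}"
    proof
      fix j assume "j \<in> sg ` {i. i < n \<and> coeff c i \<noteq> 0}"
      then obtain i where i: "i < n" "coeff c i \<noteq> 0" "j = sg i" by auto
      show "j \<in> {j. j < n \<and> coeff (RH c) j \<noteq> 0}"
      proof (cases "Suc i = n")
        case True
        hence "j = 0" "i = n - 1" using i by (auto simp: sg_def)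
        thus ?thesis using rho_coeff[OF d, of 0] i lam_nz n_pos by auto
      next
        case False
        hence "j = Suc i" "Suc i < n" using i by (auto simp: sg_def)
        thus ?thesis using rho_coeff[OF d, of "Suc i"] i by auto
      qed
    qed
  qed
  have "hamming_wt n (RH c) = card (sg ` {i. i < n \<and> coeff c i \<noteq> 0})"
    unfolding hamming_wt_def img ..
  also have "\<dots> = card {i. i < n \<and> coeff c i \<noteq> 0}"
    by (intro card_image inj_on_subset[OF inj]) auto
  finally show ?thesis unfolding hamming_wt_def .
qed

lemma rho_pow_wt: "degree c < n \<Longrightarrow> hamming_wt n ((RH ^^ j) c) = hamming_wt n c \<and> degree ((RH ^^ j) c) < n"
  by (induction j) (auto simp: rho_wt rho_deg)

end


locale cc2 = cc +
  fixes a1 a2 :: nat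
  assumes a1: "a1 \<in> coset_reps q t n" and a2: "a2 \<in> coset_reps q t n" and a12: "a1 < a2"
begin

abbreviation "x1 \<equiv> 1 + t * a1"
abbreviation "x2 \<equiv> 1 + t * a2"
abbreviation "e1 \<equiv> x1 mod NN"
abbreviation "e2 \<equiv> x2 mod NN"
abbreviation "I1 \<equiv> II a1"
abbreviation "I2 \<equiv> II a2"
definition "CC = code_sum I1 I2"
definition "u c = ev (\<zeta> ^ e1) c"
definition "v c = ev (\<zeta> ^ e2) c"

lemma a2n: "a2 < n" using a2 by (simp add: coset_reps_def)

lemma x1_lt: "x1 < NN"
proof -
  have "x1 \<le> t * (a1 + 1)" using t_pos by simp
  also have "\<dots> \<le> t * a2" using a12 by (intro mult_le_mono2) simp
  also have "\<dots> < t * n" using a2n t_pos by simp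
  finally show ?thesis .
qed

lemma cs_disj12: "Cs a1 \<inter> Cs a2 = {}"
proof (rule ccontr)
  assume "Cs a1 \<inter> Cs a2 \<noteq> {}"
  hence eq: "Cs a1 = Cs a2" by (rule cs_disj)
  have "x1 \<in> Cs a1" using cs_self[of x1] x1_lt by simp
  hence "x1 \<in> Cs a2" using eq by simp
  moreover have "\<forall>b<a2. 1 + t * b \<notin> Cs a2" using a2 by (simp add: coset_reps_def)
  ultimately show False using a12 by blast
qed

lemma e1_in: "e1 \<in> Cs a1" "e1 \<in> RR" "e1 \<notin> Cs a2"
  using cs_self[of x1] cs_sub_RR[of a1] cs_disj12 by auto
lemma e2_in: "e2 \<in> Cs a2" "e2 \<in> RR" "e2 \<notin> Cs a1"
  using cs_self[of x2] cs_sub_RR[of a2] cs_disj12 by auto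

lemma ze1: "\<zeta> ^ e1 = \<zeta> ^ x1" using zeta_mod by simp
lemma ze2: "\<zeta> ^ e2 = \<zeta> ^ x2" using zeta_mod by simp

lemma v_I1: "c \<in> I1 \<Longrightarrow> v c = 0" unfolding v_def using II_vanish e2_in by auto
lemma u_I2: "c \<in> I2 \<Longrightarrow> u c = 0" unfolding u_def using II_vanish e1_in by auto
lemma u_I1: "c \<in> I1 \<Longrightarrow> u c = 0 \<longleftrightarrow> c = 0"
  unfolding u_def ze1 using II_zero[of c a1] ev_0 by auto
lemma v_I2: "c \<in> I2 \<Longrightarrow> v c = 0 \<longleftrightarrow> c = 0"
  unfolding v_def ze2 using II_zero[of c a2] ev_0 by auto

lemma u_add: "u (c + d) = u c + u d" unfolding u_def by (simp add: ev_add)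
lemma v_add: "v (c + d) = v c + v d" unfolding v_def by (simp add: ev_add)
lemma u_diff: "u (c - d) = u c - u d" unfolding u_def by (simp add: ev_diff)
lemma v_diff: "v (c - d) = v c - v d" unfolding v_def by (simp add: ev_diff)

lemma sum_inj:
  assumes "c1 \<in> I1" "c1' \<in> I1" "c2 \<in> I2" "c2' \<in> I2" "c1 + c2 = c1' + c2'"
  shows "c1 = c1' \<and> c2 = c2'"
proof -
  have e: "c1 - c1' = c2' - c2" using assms(5) by (simp add: algebra_simps)
  have "u (c1 - c1') = 0" unfolding e u_diff using u_I2 assms by simp
  hence "c1 - c1' = 0" using u_I1[OF II_diff[OF assms(1,2)]] by simp
  moreover have "v (c2' - c2) = 0" unfolding e[symmetric] v_diff using v_I1 assms by simp
  hence "c2' - c2 = 0" using v_I2[OF II_diff[OF assms(4,3)]] by simp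
  ultimately show ?thesis by simp
qed

lemma CC_iff: "c \<in> CC \<longleftrightarrow> (\<exists>c1\<in>I1. \<exists>c2\<in>I2. c = c1 + c2)"
  unfolding CC_def code_sum_def by auto

lemma CC_img: "CC = (\<lambda>(a, b). a + b) ` (I1 \<times> I2)"
  by (auto simp: image_iff CC_iff) blast

lemma CC_fin: "finite CC" unfolding CC_img using II_fin by simp

lemma uv_sum: "c1 \<in> I1 \<Longrightarrow> c2 \<in> I2 \<Longrightarrow> u (c1 + c2) = u c1 \<and> v (c1 + c2) = v c2"
  by (simp add: u_add v_add u_I2 v_I1)

lemma CC_zero: "c \<in> CC \<Longrightarrow> c = 0 \<longleftrightarrow> u c = 0 \<and> v c = 0"
proof -
  assume "c \<in> CC"
  then obtain c1 c2 where c: "c1 \<in> I1" "c2 \<in> I2" "c = c1 + c2" using CC_iff by auto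
  show ?thesis
  proof
    assume "c = 0" thus "u c = 0 \<and> v c = 0" by (simp add: u_def v_def ev_0)
  next
    assume "u c = 0 \<and> v c = 0"
    hence "c1 = 0" "c2 = 0" using uv_sum[OF c(1,2)] u_I1[OF c(1)] v_I2[OF c(2)] c(3) by auto
    thus "c = 0" using c by simp
  qed
qed

lemma CC_rho: "c \<in> CC \<Longrightarrow> RH c \<in> CC"
  unfolding CC_iff using rho_add II_rho by metis

lemma CC_rho_pow: "c \<in> CC \<Longrightarrow> (RH ^^ j) c \<in> CC"
  by (induction j) (auto simp: CC_rho)

lemma CC_diff: "c \<in> CC \<Longrightarrow> d \<in> CC \<Longrightarrow> c - d \<in> CC"
proof -
  assume "c \<in> CC" "d \<in> CC"
  then obtain c1 c2 d1 d2 where "c1 \<in> I1" "c2 \<in> I2" "c = c1 + c2" "d1 \<in> I1" "d2 \<in> I2" "d = d1 + d2"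
    using CC_iff by metis
  moreover hence "c - d = (c1 - d1) + (c2 - d2)" by (simp add: algebra_simps)
  ultimately show ?thesis using CC_iff II_diff by metis
qed

lemma CC_deg: "c \<in> CC \<Longrightarrow> degree c < n"
  unfolding CC_iff using II_deg degree_add_less by metis

lemma u_rho: "u ((RH ^^ j) c) = (\<zeta> ^ x1) ^ j * u c"
  unfolding u_def using ev_rho_pow[OF e1_in(2)] ze1 by simp
lemma v_rho: "v ((RH ^^ j) c) = (\<zeta> ^ x2) ^ j * v c"
  unfolding v_def using ev_rho_pow[OF e2_in(2)] ze2 by simp

lemma zx_pow: "(\<zeta> ^ x) ^ j = 1 \<longleftrightarrow> NN dvd x * j"
  by (simp add: zeta_pow1 flip: power_mult)

lemma zx_aux: "((\<zeta> ^ x) ^ j - 1) * d = 0 \<longleftrightarrow> (d = 0 \<or> NN dvd x * j)"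
  by (simp only: mult_eq_0_iff right_minus_eq zx_pow) blast

lemma fix_iff: "c \<in> CC \<Longrightarrow> (RH ^^ j) c = c \<longleftrightarrow> (u c = 0 \<or> NN dvd x1 * j) \<and> (v c = 0 \<or> NN dvd x2 * j)"
proof -
  assume c: "c \<in> CC"
  have "(RH ^^ j) c = c \<longleftrightarrow> (RH ^^ j) c - c = 0" by simp
  also have "\<dots> \<longleftrightarrow> u ((RH ^^ j) c - c) = 0 \<and> v ((RH ^^ j) c - c) = 0"
    by (rule CC_zero[OF CC_diff[OF CC_rho_pow[OF c] c]])
  also have "\<dots> \<longleftrightarrow> ((\<zeta> ^ x1) ^ j - 1) * u c = 0 \<and> ((\<zeta> ^ x2) ^ j - 1) * v c = 0"
    by (simp add: u_diff v_diff u_rho v_rho algebra_simps)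
  also have "\<dots> \<longleftrightarrow> (u c = 0 \<or> NN dvd x1 * j) \<and> (v c = 0 \<or> NN dvd x2 * j)"
    by (simp only: zx_aux)
  finally show ?thesis .
qed

lemma per: "c \<in> CC \<Longrightarrow> (RH ^^ NN) c = c"
  using fix_iff by simp

abbreviation "CS \<equiv> CC - {0}"

definition "gg c = (if u c \<noteq> 0 \<and> v c \<noteq> 0 then gcd x1 x2 else if u c \<noteq> 0 then x1 else x2)"

lemma fix_gg: "c \<in> CS \<Longrightarrow> (RH ^^ j) c = c \<longleftrightarrow> NN dvd gg c * j"
proof -
  assume c: "c \<in> CS"
  hence nz: "u c \<noteq> 0 \<or> v c \<noteq> 0" using CC_zero by auto
  have g: "NN dvd gcd x1 x2 * j \<longleftrightarrow> NN dvd x1 * j \<and> NN dvd x2 * j"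
    by (metis gcd_greatest_iff gcd_mult_distrib_nat mult.commute)
  show ?thesis unfolding fix_iff[OF DiffD1[OF c]] gg_def using nz g by auto
qed

lemma card_orb_c: "c \<in> CS \<Longrightarrow> card (orb RH c) = NN div gcd NN (gg c)"
proof -
  assume c: "c \<in> CS"
  have "card (orb RH c) = (LEAST k. 0 < k \<and> (RH ^^ k) c = c)"
    using orb_card[OF N_pos per] c by simp
  also have "(\<lambda>k. 0 < k \<and> (RH ^^ k) c = c) = (\<lambda>k. 0 < k \<and> NN dvd gg c * k)"
    using fix_gg[OF c] by auto
  also have "(LEAST k. 0 < k \<and> NN dvd gg c * k) = NN div gcd NN (gg c)"
    by (rule least_dvd[OF N_pos])
  finally show ?thesis .
qed

lemma cop_xt: "coprime (1 + t * a) t"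
proof -
  have "gcd t (a * t + 1) = gcd t 1" by (rule gcd_add_mult)
  thus ?thesis by (simp add: coprime_iff_gcd_eq_1 gcd.commute ac_simps)
qed

lemma gcd_NN: "coprime g t \<Longrightarrow> gcd NN g = gcd g n"
  using gcd_mult_left_right_cancel[of g t n] by (simp add: mult.commute gcd.commute)

lemma gg_cop: "coprime (gg c) t"
proof -
  have "coprime (gcd x1 x2) t" using cop_xt[of a1] by (rule coprime_divisors[rotated 2]) auto
  thus ?thesis unfolding gg_def using cop_xt by auto
qed

lemma inv_card: "c \<in> CS \<Longrightarrow> 1 / real (card (orb RH c)) = real (gcd (gg c) n) / real NN"
proof -
  assume c: "c \<in> CS"
  have d: "gcd NN (gg c) dvd NN" by simp
  have pos: "0 < gcd NN (gg c)" using N_pos by simp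
  have "real (card (orb RH c)) = real NN / real (gcd NN (gg c))"
    unfolding card_orb_c[OF c] by (rule real_of_nat_div[OF d])
  thus ?thesis using pos N_pos gcd_NN[OF gg_cop[of c]] by simp
qed

end


context cc2 begin

definition "X12 = {c \<in> CS. u c \<noteq> 0 \<and> v c \<noteq> 0}"
definition "X1 = {c \<in> CS. u c \<noteq> 0 \<and> v c = 0}"
definition "X2 = {c \<in> CS. u c = 0 \<and> v c \<noteq> 0}"
abbreviation "SS \<equiv> (\<lambda>(a, b). a + b :: 'a poly)"

lemma SS_inj: "inj_on SS (I1 \<times> I2)"
proof (rule inj_onI)
  fix p p' assume "p \<in> I1 \<times> I2" "p' \<in> I1 \<times> I2" "SS p = SS p'"
  thus "p = p'" using sum_inj[of "fst p" "fst p'" "snd p" "snd p'"] by (cases p, cases p') auto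
qed

lemma u0: "u 0 = 0" by (simp add: u_def ev_0)
lemma v0: "v 0 = 0" by (simp add: v_def ev_0)

lemma X_img:
  "X12 = SS ` ((I1 - {0}) \<times> (I2 - {0}))"
  "X1 = SS ` ((I1 - {0}) \<times> {0})"
  "X2 = SS ` ({0} \<times> (I2 - {0}))"
proof -
  have dec: "c \<in> CC \<Longrightarrow> \<exists>c1 c2. c1 \<in> I1 \<and> c2 \<in> I2 \<and> c = c1 + c2 \<and> (u c \<noteq> 0 \<longleftrightarrow> c1 \<noteq> 0) \<and> (v c \<noteq> 0 \<longleftrightarrow> c2 \<noteq> 0)" for c
  proof -
    assume "c \<in> CC"
    then obtain c1 c2 where c: "c1 \<in> I1" "c2 \<in> I2" "c = c1 + c2" using CC_iff by auto
    thus ?thesis using uv_sum[OF c(1,2)] u_I1[OF c(1)] v_I2[OF c(2)]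
      by (intro exI[of _ c1] exI[of _ c2]) simp
  qed
  have mem: "c1 \<in> I1 \<Longrightarrow> c2 \<in> I2 \<Longrightarrow> c1 + c2 \<in> CC \<and> (u (c1 + c2) \<noteq> 0 \<longleftrightarrow> c1 \<noteq> 0) \<and> (v (c1 + c2) \<noteq> 0 \<longleftrightarrow> c2 \<noteq> 0)" for c1 c2
  proof -
    assume a: "c1 \<in> I1" "c2 \<in> I2"
    have "c1 + c2 \<in> CC" using a CC_iff by blast
    thus ?thesis using uv_sum[OF a] u_I1[OF a(1)] v_I2[OF a(2)] by simp
  qed
  have nz: "c \<in> CC \<Longrightarrow> u c \<noteq> 0 \<or> v c \<noteq> 0 \<Longrightarrow> c \<noteq> 0" for c using CC_zero by blast
  show "X12 = SS ` ((I1 - {0}) \<times> (I2 - {0}))"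
  proof
    show "X12 \<subseteq> SS ` ((I1 - {0}) \<times> (I2 - {0}))"
    proof
      fix c assume "c \<in> X12"
      hence h: "c \<in> CC" "u c \<noteq> 0" "v c \<noteq> 0" unfolding X12_def by auto
      obtain c1 c2 where cc: "c1 \<in> I1" "c2 \<in> I2" "c = c1 + c2" "(u c \<noteq> 0) = (c1 \<noteq> 0)" "(v c \<noteq> 0) = (c2 \<noteq> 0)"
        using dec[OF h(1)] by blast
      hence "c1 \<in> I1" "c2 \<in> I2" "c = c1 + c2" "c1 \<noteq> 0" "c2 \<noteq> 0" using h by auto
      thus "c \<in> SS ` ((I1 - {0}) \<times> (I2 - {0}))" by (auto intro!: image_eqI[of _ _ "(c1, c2)"])
    qed
    show "SS ` ((I1 - {0}) \<times> (I2 - {0})) \<subseteq> X12"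
    proof
      fix c assume "c \<in> SS ` ((I1 - {0}) \<times> (I2 - {0}))"
      then obtain c1 c2 where cc: "c1 \<in> I1" "c1 \<noteq> 0" "c2 \<in> I2" "c2 \<noteq> 0" "c = c1 + c2" by auto
      thus "c \<in> X12" using mem[of c1 c2] nz[of "c1 + c2"] unfolding X12_def by auto
    qed
  qed
  show "X1 = SS ` ((I1 - {0}) \<times> {0})"
  proof
    show "X1 \<subseteq> SS ` ((I1 - {0}) \<times> {0})"
    proof
      fix c assume "c \<in> X1"
      hence h: "c \<in> CC" "u c \<noteq> 0" "v c = 0" unfolding X1_def by auto
      obtain c1 c2 where cc: "c1 \<in> I1" "c2 \<in> I2" "c = c1 + c2" "(u c \<noteq> 0) = (c1 \<noteq> 0)" "(v c \<noteq> 0) = (c2 \<noteq> 0)"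
        using dec[OF h(1)] by blast
      hence "c1 \<in> I1" "c2 \<in> I2" "c = c1 + c2" "c1 \<noteq> 0" "c2 = 0" using h by auto
      thus "c \<in> SS ` ((I1 - {0}) \<times> {0})" by (auto intro!: image_eqI[of _ _ "(c1, 0)"])
    qed
    show "SS ` ((I1 - {0}) \<times> {0}) \<subseteq> X1"
    proof
      fix c assume "c \<in> SS ` ((I1 - {0}) \<times> {0})"
      then obtain p where p: "p \<in> (I1 - {0}) \<times> {0}" "c = SS p" by (rule imageE)
      have "fst p \<in> I1" "fst p \<noteq> 0" "c = fst p + 0" using p by (auto simp: mem_Times_iff split: prod.splits)
      then obtain c1 where "c1 \<in> I1" "c1 \<noteq> 0" "c = c1 + 0" by blast
      moreover have "(0::'a poly) \<in> I2" by (rule II_0)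
      ultimately obtain c2 where cc: "c1 \<in> I1" "c1 \<noteq> 0" "c2 \<in> I2" "c2 = 0" "c = c1 + c2" by blast
      thus "c \<in> X1" using mem[of c1 c2] nz[of "c1 + c2"] unfolding X1_def by auto
    qed
  qed
  show "X2 = SS ` ({0} \<times> (I2 - {0}))"
  proof
    show "X2 \<subseteq> SS ` ({0} \<times> (I2 - {0}))"
    proof
      fix c assume "c \<in> X2"
      hence h: "c \<in> CC" "u c = 0" "v c \<noteq> 0" unfolding X2_def by auto
      obtain c1 c2 where cc: "c1 \<in> I1" "c2 \<in> I2" "c = c1 + c2" "(u c \<noteq> 0) = (c1 \<noteq> 0)" "(v c \<noteq> 0) = (c2 \<noteq> 0)"
        using dec[OF h(1)] by blast
      hence "c1 \<in> I1" "c2 \<in> I2" "c = c1 + c2" "c1 = 0" "c2 \<noteq> 0" using h by auto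
      thus "c \<in> SS ` ({0} \<times> (I2 - {0}))" by (auto intro!: image_eqI[of _ _ "(0, c2)"])
    qed
    show "SS ` ({0} \<times> (I2 - {0})) \<subseteq> X2"
    proof
      fix c assume "c \<in> SS ` ({0} \<times> (I2 - {0}))"
      then obtain p where p: "p \<in> {0} \<times> (I2 - {0})" "c = SS p" by (rule imageE)
      have "snd p \<in> I2" "snd p \<noteq> 0" "c = 0 + snd p" using p by (auto simp: mem_Times_iff split: prod.splits)
      then obtain c2 where "c2 \<in> I2" "c2 \<noteq> 0" "c = 0 + c2" by blast
      moreover have "(0::'a poly) \<in> I1" by (rule II_0)
      ultimately obtain c1 where cc: "c1 \<in> I1" "c1 = 0" "c2 \<in> I2" "c2 \<noteq> 0" "c = c1 + c2" by blast
      thus "c \<in> X2" using mem[of c1 c2] nz[of "c1 + c2"] unfolding X2_def by auto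
    qed
  qed
qed

abbreviation "d1 \<equiv> card (Cs a1)"
abbreviation "d2 \<equiv> card (Cs a2)"

lemma cardI0: "card (II al - {0}) = q ^ card (Cs al) - 1"
  using II_card[of al] II_0[of al] II_fin[of al] by (simp add: card_Diff_singleton)

lemma X_card:
  "card X12 = (q ^ d1 - 1) * (q ^ d2 - 1)"
  "card X1 = q ^ d1 - 1"
  "card X2 = q ^ d2 - 1"
proof -
  have s1: "(I1 - {0}) \<times> (I2 - {0}) \<subseteq> I1 \<times> I2" "(I1 - {0}) \<times> {0} \<subseteq> I1 \<times> I2"
    "{0} \<times> (I2 - {0}) \<subseteq> I1 \<times> I2" using II_0 by auto
  show "card X12 = (q ^ d1 - 1) * (q ^ d2 - 1)"
    unfolding X_img using card_image[OF inj_on_subset[OF SS_inj s1(1)]]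
    by (simp add: card_cartesian_product cardI0)
  show "card X1 = q ^ d1 - 1"
    unfolding X_img using card_image[OF inj_on_subset[OF SS_inj s1(2)]]
    by (simp add: card_cartesian_product cardI0)
  show "card X2 = q ^ d2 - 1"
    unfolding X_img using card_image[OF inj_on_subset[OF SS_inj s1(3)]]
    by (simp add: card_cartesian_product cardI0)
qed

lemma CS_split: "CS = X12 \<union> X1 \<union> X2"
  using CC_zero unfolding X12_def X1_def X2_def by auto

lemma CS_inv: "c \<in> CS \<Longrightarrow> RH c \<in> CS"
proof -
  assume c: "c \<in> CS"
  have "RH c \<in> CC" using CC_rho c by auto
  moreover have "u (RH c) = \<zeta> ^ x1 * u c" "v (RH c) = \<zeta> ^ x2 * v c"
    using u_rho[of 1 c] v_rho[of 1 c] by simp_all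
  moreover have "u c \<noteq> 0 \<or> v c \<noteq> 0" using c CC_zero by auto
  ultimately show ?thesis using CC_zero zeta_nz by auto
qed

lemma sum_const_on:
  assumes "\<And>c. c \<in> A \<Longrightarrow> f c = k"
  shows "(\<Sum>c\<in>A. f c) = real (card A) * k"
proof -
  have "(\<Sum>c\<in>A. f c) = (\<Sum>c\<in>A. k)" by (rule sum.cong) (use assms in auto)
  thus ?thesis by (simp add: sum_constant)
qed

lemma count_main:
  "real (card (orb RH ` CS)) =
     real ((q ^ d1 - 1) * (q ^ d2 - 1) * gcd (gcd x1 x2) n) / real NN
   + real ((q ^ d1 - 1) * gcd x1 n) / real NN
   + real ((q ^ d2 - 1) * gcd x2 n) / real NN"
proof -
  let ?w = "\<lambda>c. real (gcd (gg c) n) / real NN"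
  have fin: "finite CS" using CC_fin by simp
  have "real (card (orb RH ` CS)) = (\<Sum>c\<in>CS. 1 / real (card (orb RH c)))"
  proof (rule orbit_count[OF fin CS_inv])
    fix c assume "c \<in> CS"
    thus "\<exists>P>0. (RH ^^ P) c = c" using N_pos per[of c] by blast
  qed simp
  also have "\<dots> = (\<Sum>c\<in>CS. ?w c)"
    by (rule sum.cong[OF refl]) (rule inv_card)
  also have "\<dots> = sum ?w X12 + sum ?w X1 + sum ?w X2"
  proof -
    have f: "finite X12" "finite X1" "finite X2" using fin CS_split by auto
    have d: "X12 \<inter> X1 = {}" "(X12 \<union> X1) \<inter> X2 = {}" unfolding X12_def X1_def X2_def by auto
    have "sum ?w CS = sum ?w (X12 \<union> X1) + sum ?w X2"
      unfolding CS_split by (rule sum.union_disjoint) (use f d in auto)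
    also have "sum ?w (X12 \<union> X1) = sum ?w X12 + sum ?w X1"
      by (rule sum.union_disjoint) (use f d in auto)
    finally show ?thesis .
  qed
  also have "sum ?w X12 = real (card X12) * (real (gcd (gcd x1 x2) n) / real NN)"
    by (rule sum_const_on) (simp add: X12_def gg_def)
  also have "sum ?w X1 = real (card X1) * (real (gcd x1 n) / real NN)"
    by (rule sum_const_on) (simp add: X1_def gg_def)
  also have "sum ?w X2 = real (card X2) * (real (gcd x2 n) / real NN)"
    by (rule sum_const_on) (simp add: X2_def gg_def)
  finally show ?thesis unfolding X_card by (simp only: of_nat_mult times_divide_eq_right)
qed

lemma orb_eq_rho: "rho_orbit lam n = orb RH"
  by (intro ext) (simp add: rho_orbit_def orb_def)

lemma same_orb_iff: "c1 \<in> CS \<Longrightarrow> c2 \<in> CS \<Longrightarrow> orb RH c1 = orb RH c2 \<longleftrightarrow> (\<exists>j. (RH ^^ j) c1 = c2)"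
proof -
  assume c: "c1 \<in> CS" "c2 \<in> CS"
  show ?thesis
  proof
    assume "orb RH c1 = orb RH c2"
    hence "c2 \<in> orb RH c1" using orb_self[of c2 RH] by simp
    thus "\<exists>j. (RH ^^ j) c1 = c2" unfolding orb_def by auto
  next
    assume "\<exists>j. (RH ^^ j) c1 = c2"
    hence "c2 \<in> orb RH c1" unfolding orb_def by auto
    thus "orb RH c1 = orb RH c2" using orb_eq[OF N_pos per] c by auto
  qed
qed

lemma wt_orb: "c \<in> CS \<Longrightarrow> c' \<in> orb RH c \<Longrightarrow> hamming_wt n c' = hamming_wt n c"
  unfolding orb_def using rho_pow_wt CC_deg by auto

lemma wt_part:
  "card (hamming_wt n ` CS) \<le> card (orb RH ` CS) \<and>
   (card (hamming_wt n ` CS) = card (orb RH ` CS) \<longleftrightarrow>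
     (\<forall>c1\<in>CS. \<forall>c2\<in>CS. hamming_wt n c1 = hamming_wt n c2 \<longrightarrow> (\<exists>j. (RH ^^ j) c1 = c2)))"
proof -
  define W where "W (Ob :: 'a poly set) = hamming_wt n (SOME c. c \<in> Ob)" for Ob
  have W: "W (orb RH c) = hamming_wt n c" if c: "c \<in> CS" for c
  proof -
    have "(SOME x. x \<in> orb RH c) \<in> orb RH c" using orb_self[of c RH] by (rule someI)
    thus ?thesis unfolding W_def using wt_orb[OF c] by simp
  qed
  have img: "hamming_wt n ` CS = W ` (orb RH ` CS)"
    by (auto simp: image_image W intro!: image_cong)
  have fin: "finite (orb RH ` CS)" using CC_fin by simp
  have le: "card (hamming_wt n ` CS) \<le> card (orb RH ` CS)" unfolding img by (rule card_image_le[OF fin])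
  have "card (hamming_wt n ` CS) = card (orb RH ` CS) \<longleftrightarrow> inj_on W (orb RH ` CS)"
    unfolding img by (rule inj_on_iff_eq_card[OF fin, symmetric])
  also have "\<dots> \<longleftrightarrow> (\<forall>c1\<in>CS. \<forall>c2\<in>CS. hamming_wt n c1 = hamming_wt n c2 \<longrightarrow> orb RH c1 = orb RH c2)"
    unfolding inj_on_def by (auto simp: W)
  also have "\<dots> \<longleftrightarrow> (\<forall>c1\<in>CS. \<forall>c2\<in>CS. hamming_wt n c1 = hamming_wt n c2 \<longrightarrow> (\<exists>j. (RH ^^ j) c1 = c2))"
    using same_orb_iff by auto
  finally show ?thesis using le by simp
qed

end


theorem corollary1:
  fixes lam :: "'a::{field,finite}"
    and emb :: "'a \<Rightarrow> 'b::{field,finite}"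
    and \<zeta> :: 'b
    and q n t a1 a2 :: nat
  assumes q_def: "q = card (UNIV :: 'a set)"
    and n_pos: "0 < n"
    and cop: "coprime n q"
    and lam_nz: "lam \<noteq> 0"
    and t_def: "t = mord lam"
    and emb_add: "\<And>x y. emb (x + y) = emb x + emb y"
    and emb_mult: "\<And>x y. emb (x * y) = emb x * emb y"
    and emb_one: "emb 1 = 1"
    and zeta_ord: "\<zeta> \<noteq> 0" "mord \<zeta> = t * n"
    and zeta_n: "\<zeta> ^ n = emb lam"
    and a1: "a1 \<in> coset_reps q t n"
    and a2: "a2 \<in> coset_reps q t n"
    and a12: "a1 < a2"
  shows
    "let C = code_sum (irr_code emb \<zeta> lam q t n a1) (irr_code emb \<zeta> lam q t n a2);
         Cs = C - {0};
         d1 = card (cyc_coset q (t * n) (1 + t * a1));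
         d2 = card (cyc_coset q (t * n) (1 + t * a2));
         N = num_rho_orbits lam n Cs
     in real N =
          real ((q ^ d1 - 1) * (q ^ d2 - 1) * gcd (gcd (1 + t * a1) (1 + t * a2)) n) / real (t * n)
        + real ((q ^ d1 - 1) * gcd (1 + t * a1) n) / real (t * n)
        + real ((q ^ d2 - 1) * gcd (1 + t * a2) n) / real (t * n)
      \<and> card (hamming_wt n ` Cs) \<le> N
      \<and> (card (hamming_wt n ` Cs) = N \<longleftrightarrow>
           (\<forall>c1\<in>Cs. \<forall>c2\<in>Cs. hamming_wt n c1 = hamming_wt n c2 \<longrightarrow>
              (\<exists>j::nat. (rho lam n ^^ j) c1 = c2)))"
proof -
  interpret cc2 lam emb \<zeta> q n t a1 a2
    using q_def n_pos cop lam_nz t_def emb_add emb_mult emb_one zeta_ord zeta_n a1 a2 a12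
    by unfold_locales auto
  have e: "code_sum (irr_code emb \<zeta> lam q t n a1) (irr_code emb \<zeta> lam q t n a2) = CC"
    by (simp add: CC_def)
  show ?thesis
    unfolding Let_def e num_rho_orbits_def orb_eq_rho
    using count_main wt_part by simp
qed

end
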